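(* Let $\|\cdot\|=\|\cdot\|_2$, and let $d_*>0$, $a<d_*$, $\bar D>0$. Then $$\kappa(a,d_*,\bar D)\le\sqrt{\max\Big\{1-\frac{(d_*-a)^2}{4\bar D^2},\ \frac{d_*+a}{2d_*}\Big\}},$$ where $\kappa(a,d_*,\bar D):=\max\{\min_{\beta\in[0,1]}\|w-\beta z\|_2:\ \|w\|_2=1,\ w^\top z\ge(1-a/d_* )/2,\ \|z\|_2\le\bar D/d_*\}$.
   Context: For the $\ell_2$-norm, $\nabla\|w\|_2=w$ when $\|w\|_2=1$, so the general definition $\kappa(a,d_*,\bar D)=\max_{\|w\|=1,\ \nabla\|w\|^\top z\ge(1-a/d_* )/2,\ \|z\|_2\le\bar D/d_*}\min_{\beta\in[0,1]}\|w-\beta z\|$ reduces to the one stated. *)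

theory Defs
  imports "HOL-Analysis.Analysis"
begin

definition kappa_inner :: "'a::euclidean_space \<Rightarrow> 'a \<Rightarrow> real" where
  "kappa_inner w z = (INF \<beta>\<in>{0..1::real}. norm (w - \<beta> *\<^sub>R z))"

definition kappa_feasible :: "real \<Rightarrow> real \<Rightarrow> real \<Rightarrow> ('a::euclidean_space \<times> 'a) set" where
  "kappa_feasible a ds Db = {(w, z). norm w = 1 \<and> inner w z \<ge> (1 - a / ds) / 2 \<and> norm z \<le> Db / ds}"

end

theory Submission
  imports Defs
begin

theorem mainTheorem8:
  fixes a ds Db :: real and w z :: "'a::euclidean_space"
  assumes "ds > 0" and "a < ds" and "Db > 0"
    and "(w, z) \<in> kappa_feasible a ds Db"
  shows "kappa_inner w z \<le> sqrt (max (1 - (ds - a)^2 / (4 * Db^2)) ((ds + a) / (2 * ds)))"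
proof -
  define t where "t = inner w z"
  define s where "s = inner z z"
  define c where "c = (1 - a / ds) / 2"
  define R where "R = Db / ds"
  have nw: "norm w = 1" and tc: "t \<ge> c" and nz: "norm z \<le> R"
    using assms(4) by (auto simp: kappa_feasible_def t_def c_def R_def)
  have c0: "c > 0" using assms(1,2) by (simp add: c_def field_simps)
  have ww: "inner w w = 1" using nw by (simp add: norm_eq_sqrt_inner)
  have s_eq: "s = (norm z)^2" by (simp add: s_def power2_norm_eq_inner)
  have sR: "s \<le> R^2" using nz s_eq by (simp add: power_mono)
  have nsq: "\<And>\<beta>. (norm (w - \<beta> *\<^sub>R z))^2 = 1 - 2*\<beta>*t + \<beta>^2 * s"
    unfolding power2_norm_eq_inner
    by (simp add: inner_diff_left inner_diff_right ww t_def s_def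
        inner_commute algebra_simps power2_eq_square)
  have cs: "t^2 \<le> s" using Cauchy_Schwarz_ineq[of w z] ww by (simp add: t_def s_def)
  have t0: "t > 0" using tc c0 by linarith
  have s0: "s > 0" using cs t0 by (metis power2_less_0 not_le order.strict_trans1 zero_less_power2 less_eq_real_def t0)
  define M where "M = max (1 - (ds - a)^2 / (4 * Db^2)) ((ds + a) / (2 * ds))"
  obtain \<beta> where b01: "\<beta> \<in> {0..1}" and bv: "1 - 2*\<beta>*t + \<beta>^2 * s \<le> M"
  proof (cases "t \<ge> s")
    case True
    have "1 - 2*t + s \<le> 1 - c" using True tc by simp
    also have "1 - c = (ds + a) / (2 * ds)" using assms(1) by (simp add: c_def field_simps)
    also have "\<dots> \<le> M" by (simp add: M_def)
    finally show ?thesis using that[of 1] by simp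
  next
    case False
    define b where "b = t / s"
    have b01: "b \<in> {0..1}" using False t0 s0 by (simp add: b_def)
    have "1 - 2*b*t + b^2 * s = 1 - t^2 / s" using s0
      by (simp add: b_def field_simps power2_eq_square)
    also have "t^2 / s \<ge> c^2 / R^2"
    proof -
      have "c^2 \<le> t^2" using tc c0 by (simp add: power_mono)
      moreover have "R^2 > 0" using sR s0 by linarith
      ultimately show ?thesis using sR s0
        by (simp add: frac_le divide_le_eq_1 frac_le)
    qed
    hence "1 - t^2 / s \<le> 1 - c^2/R^2" by simp
    also have "c^2/R^2 = (ds - a)^2 / (4 * Db^2)" using assms(1,3)
      by (simp add: c_def R_def field_simps power2_eq_square)
    also have "1 - \<dots> \<le> M" by (simp add: M_def)
    finally show ?thesis using that[OF b01] by simp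
  qed
  have "kappa_inner w z \<le> norm (w - \<beta> *\<^sub>R z)"
    unfolding kappa_inner_def
    by (rule cINF_lower[OF _ b01]) (auto intro: bdd_belowI[where m=0])
  also have "norm (w - \<beta> *\<^sub>R z) = sqrt ((norm (w - \<beta> *\<^sub>R z))^2)" by simp
  also have "\<dots> \<le> sqrt M" using nsq bv by simp
  finally show ?thesis by (simp add: M_def)
qed

end
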